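(* Let $X_1$ and $X_2$ be independent continuous random variables with densities $f_{X_1},f_{X_2}$ that are symmetric around their respective means and positive on all of $\mathbb{R}$. For $\theta\in[0,1]$ and $w\in[0,1]$ define $$L(w\mid\theta)=\theta\,\mathbf{E}\big[X_1^2\,\mathbf{1}\big((1-w)X_2^2\ge wX_1^2\big)\big]+(1-\theta)\,\mathbf{E}\big[X_2^2\,\mathbf{1}\big((1-w)X_2^2<wX_1^2\big)\big].$$ Then for each fixed $\theta\in[0,1]$, the function $w\mapsto L(w\mid\theta)$ is strictly quasi-convex and is minimized at $w^\star=\theta$.
   Context: $\mathbf{1}(\cdot)$ denotes the indicator function of an event. *)

theory Defs
  imports "HOL-Probability.Probability"
begin

definition loss :: "'a measure \<Rightarrow> ('a \<Rightarrow> real) \<Rightarrow> ('a \<Rightarrow> real) \<Rightarrow> real \<Rightarrow> real \<Rightarrow> real" where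
  "loss M X1 X2 \<theta> w =
     \<theta> * integral\<^sup>L M (\<lambda>\<omega>. (X1 \<omega>)^2 * indicator {\<omega>. (1 - w) * (X2 \<omega>)^2 \<ge> w * (X1 \<omega>)^2} \<omega>)
   + (1 - \<theta>) * integral\<^sup>L M (\<lambda>\<omega>. (X2 \<omega>)^2 * indicator {\<omega>. (1 - w) * (X2 \<omega>)^2 < w * (X1 \<omega>)^2} \<omega>)"

definition strictly_quasiconvex_on :: "real set \<Rightarrow> (real \<Rightarrow> real) \<Rightarrow> bool" where
  "strictly_quasiconvex_on S f \<longleftrightarrow>
     (\<forall>x\<in>S. \<forall>y\<in>S. \<forall>t. x \<noteq> y \<and> 0 < t \<and> t < 1 \<longrightarrow>
        f ((1 - t) * x + t * y) < max (f x) (f y))"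

end

theory Submission
  imports Defs
begin

lemma pw:
  fixes a b w w' \<theta> :: real
  assumes "a \<ge> 0" "b \<ge> 0" "w < w'"
  shows "(if w*a \<le> (1-w)*b \<and> (1-w')*b < w'*a then 1 else 0) * ((1-\<theta>)*b - \<theta>*a)
    = (\<theta> * (a * (if (1-w')*b \<ge> w'*a then 1 else 0)) + (1-\<theta>) * (b * (if (1-w')*b < w'*a then 1 else 0)))
     - (\<theta> * (a * (if (1-w)*b \<ge> w*a then 1 else 0)) + (1-\<theta>) * (b * (if (1-w)*b < w*a then 1 else 0)))"
proof -
  have m: "(1-w')*b \<ge> w'*a \<Longrightarrow> (1-w)*b \<ge> w*a"
  proof -
    assume h: "(1-w')*b \<ge> w'*a"
    have "(1-w)*b \<ge> (1-w')*b" using assms by (intro mult_right_mono) auto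
    moreover have "w'*a \<ge> w*a" using assms by (intro mult_right_mono) auto
    ultimately show ?thesis using h by linarith
  qed
  show ?thesis using m by (auto simp: algebra_simps)
qed

lemma loss_diff:
  fixes M :: "'a measure" and X1 X2 :: "'a \<Rightarrow> real"
  assumes "prob_space M"
    and m1[measurable]: "X1 \<in> borel_measurable M" and m2[measurable]: "X2 \<in> borel_measurable M"
    and i1: "integrable M (\<lambda>\<omega>. (X1 \<omega>)^2)"
    and i2: "integrable M (\<lambda>\<omega>. (X2 \<omega>)^2)"
    and ww: "w < w'"
  shows "loss M X1 X2 \<theta> w' - loss M X1 X2 \<theta> w =
     (\<integral>\<omega>. indicator {\<omega>. w*(X1 \<omega>)^2 \<le> (1-w)*(X2 \<omega>)^2 \<and> (1-w')*(X2 \<omega>)^2 < w'*(X1 \<omega>)^2} \<omega> * ((1-\<theta>)*(X2 \<omega>)^2 - \<theta>*(X1 \<omega>)^2) \<partial>M)"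
proof -
  have I1: "integrable M (\<lambda>\<omega>. (X1 \<omega>)^2 * indicator {\<omega>. (1 - v) * (X2 \<omega>)^2 \<ge> v * (X1 \<omega>)^2} \<omega>)" for v
    by (rule Bochner_Integration.integrable_bound[OF i1]) (auto simp: indicator_def)
  have I2: "integrable M (\<lambda>\<omega>. (X2 \<omega>)^2 * indicator {\<omega>. (1 - v) * (X2 \<omega>)^2 < v * (X1 \<omega>)^2} \<omega>)" for v
    by (rule Bochner_Integration.integrable_bound[OF i2]) (auto simp: indicator_def)
  have "(\<integral>\<omega>. indicator {\<omega>. w*(X1 \<omega>)^2 \<le> (1-w)*(X2 \<omega>)^2 \<and> (1-w')*(X2 \<omega>)^2 < w'*(X1 \<omega>)^2} \<omega> * ((1-\<theta>)*(X2 \<omega>)^2 - \<theta>*(X1 \<omega>)^2) \<partial>M)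
    = (\<integral>\<omega>. (\<theta> * ((X1 \<omega>)^2 * indicator {\<omega>. (1 - w') * (X2 \<omega>)^2 \<ge> w' * (X1 \<omega>)^2} \<omega>) + (1-\<theta>) * ((X2 \<omega>)^2 * indicator {\<omega>. (1 - w') * (X2 \<omega>)^2 < w' * (X1 \<omega>)^2} \<omega>))
     - (\<theta> * ((X1 \<omega>)^2 * indicator {\<omega>. (1 - w) * (X2 \<omega>)^2 \<ge> w * (X1 \<omega>)^2} \<omega>) + (1-\<theta>) * ((X2 \<omega>)^2 * indicator {\<omega>. (1 - w) * (X2 \<omega>)^2 < w * (X1 \<omega>)^2} \<omega>)) \<partial>M)"
    apply (rule Bochner_Integration.integral_cong[OF refl])
    subgoal for \<omega> using pw[of "(X1 \<omega>)^2" "(X2 \<omega>)^2" w w' \<theta>] ww unfolding indicator_def of_bool_def mem_Collect_eq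
      by simp
    done
  also have "\<dots> = loss M X1 X2 \<theta> w' - loss M X1 X2 \<theta> w"
    unfolding loss_def using I1 I2 by simp
  finally show ?thesis by simp
qed


lemma pos_event:
  fixes X :: "'a \<Rightarrow> real" and f :: "real \<Rightarrow> ennreal"
  assumes D: "distributed M lborel X f" and fpos: "\<And>x. f x > 0"
    and A: "open A" "c \<in> A"
  shows "emeasure M (X -` A \<inter> space M) \<noteq> 0"
proof
  assume h: "emeasure M (X -` A \<inter> space M) = 0"
  have Ab: "A \<in> sets lborel" using A by simp
  have fm: "f \<in> borel_measurable lborel" using distributed_borel_measurable[OF D] by simp
  have "(\<integral>\<^sup>+x. f x * indicator A x \<partial>lborel) = 0"
    using h distributed_emeasure[OF D Ab] by simp
  hence "AE x in lborel. f x * indicator A x = 0"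
    using fm Ab by (subst (asm) nn_integral_0_iff_AE) auto
  hence ae: "AE x in lborel. x \<notin> A"
    by eventually_elim (use fpos in \<open>auto simp: indicator_def less_le\<close>)
  obtain e where e: "e > 0" "ball c e \<subseteq> A" using A open_contains_ball by blast
  have "AE x in lborel. x \<notin> ball c e" using ae by (rule AE_mp) (use e in \<open>auto intro!: AE_I2\<close>)
  hence "emeasure lborel (ball c e) = 0"
    by (subst (asm) AE_iff_measurable[of "ball c e"]) auto
  moreover have "emeasure lborel (ball c e) = ennreal (2*e)"
    using e by (simp add: ball_eq_greaterThanLessThan)
  ultimately show False using e by simp
qed


lemma pos_prob:
  fixes M :: "'a measure" and X1 X2 :: "'a \<Rightarrow> real"
    and f1 f2 :: "real \<Rightarrow> ennreal"
  assumes P: "prob_space M"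
    and ind: "prob_space.indep_var M borel X1 borel X2"
    and D1: "distributed M lborel X1 f1"
    and D2: "distributed M lborel X2 f2"
    and p1: "\<And>x. f1 x > 0" and p2: "\<And>x. f2 x > 0"
    and w: "0 \<le> w" "w < w'" "w' \<le> 1"
  shows "measure M {\<omega>\<in>space M. w*(X1 \<omega>)^2 < (1-w)*(X2 \<omega>)^2 \<and> (1-w')*(X2 \<omega>)^2 < w'*(X1 \<omega>)^2} > 0"
proof -
  interpret prob_space M by fact
  have m1[measurable]: "X1 \<in> borel_measurable M" using distributed_measurable[OF D1] by simp
  have m2[measurable]: "X2 \<in> borel_measurable M" using distributed_measurable[OF D2] by simp
  define S where "S = {p::real\<times>real. w*(fst p)^2 < (1-w)*(snd p)^2 \<and> (1-w')*(snd p)^2 < w'*(fst p)^2}"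
  have oS: "open S" unfolding S_def
    by (intro open_Collect_conj open_Collect_less continuous_intros)
  define m where "m = (w+w')/2"
  have m: "w < m" "m < w'" "m < 1" "0 < m" using w by (auto simp: m_def)
  define r where "r = sqrt (m/(1-m))"
  have r2: "r^2 = m/(1-m)" unfolding r_def using m by simp
  have "(1-w)*(m/(1-m)) > w" using m by (simp add: field_simps)
  moreover have "(1-w')*(m/(1-m)) < w'" using m by (simp add: field_simps)
  ultimately have "(1, r) \<in> S" unfolding S_def using r2 by simp
  then obtain A B where AB: "open A" "open B" "(1, r) \<in> A \<times> B" "A \<times> B \<subseteq> S"
    using open_prod_elim[OF oS] by metis
  have Ab: "A \<in> sets borel" "B \<in> sets borel" using AB by auto
  let ?E1 = "X1 -` A \<inter> space M" and ?E2 = "X2 -` B \<inter> space M"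
  have e1: "emeasure M ?E1 \<noteq> 0" using pos_event[OF D1 p1 AB(1)] AB(3) by auto
  have e2: "emeasure M ?E2 \<noteq> 0" using pos_event[OF D2 p2 AB(2)] AB(3) by auto
  have "prob ?E1 > 0" using e1 by (simp add: emeasure_eq_measure zero_less_measure_iff)
  moreover have "prob ?E2 > 0" using e2 by (simp add: emeasure_eq_measure zero_less_measure_iff)
  moreover have "prob (?E1 \<inter> ?E2) = prob ?E1 * prob ?E2"
  proof -
    have "indep_set (sigma_sets (space M) { X1 -` A \<inter> space M | A. A \<in> sets borel})
      (sigma_sets (space M) { X2 -` A \<inter> space M | A. A \<in> sets borel})"
      using ind by (simp add: indep_var_eq)
    moreover have "?E1 \<in> sigma_sets (space M) { X1 -` A \<inter> space M | A. A \<in> sets borel}"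
      using Ab by (intro sigma_sets.Basic) auto
    moreover have "?E2 \<in> sigma_sets (space M) { X2 -` A \<inter> space M | A. A \<in> sets borel}"
      using Ab by (intro sigma_sets.Basic) auto
    ultimately show ?thesis by (simp add: indep_sets2_eq)
  qed
  ultimately have "prob (?E1 \<inter> ?E2) > 0" by simp
  also have "prob (?E1 \<inter> ?E2) \<le> measure M {\<omega>\<in>space M. w*(X1 \<omega>)^2 < (1-w)*(X2 \<omega>)^2 \<and> (1-w')*(X2 \<omega>)^2 < w'*(X1 \<omega>)^2}"
    by (rule finite_measure_mono) (use AB(4) in \<open>auto simp: S_def\<close>)
  finally show ?thesis .
qed


lemma integral_pos_aux:
  fixes u :: "'a \<Rightarrow> real"
  assumes P: "prob_space M" and ui: "integrable M u" and u0: "\<And>\<omega>. u \<omega> \<ge> 0"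
    and Q[measurable]: "{\<omega>\<in>space M. Q \<omega>} \<in> sets M"
    and mQ: "measure M {\<omega>\<in>space M. Q \<omega>} > 0" and uQ: "\<And>\<omega>. Q \<omega> \<Longrightarrow> u \<omega> > 0"
  shows "integral\<^sup>L M u > 0"
proof -
  interpret prob_space M by fact
  have "integral\<^sup>L M u \<ge> 0" using u0 by (intro Bochner_Integration.integral_nonneg) auto
  moreover have "integral\<^sup>L M u \<noteq> 0"
  proof
    assume "integral\<^sup>L M u = 0"
    hence "AE \<omega> in M. u \<omega> = 0" using integral_nonneg_eq_0_iff_AE[OF ui] u0 by simp
    hence "AE \<omega> in M. \<not> Q \<omega>" by (rule AE_mp) (auto intro!: AE_I2 dest: uQ)
    hence "emeasure M {\<omega>\<in>space M. Q \<omega>} = 0"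
      by (subst (asm) AE_iff_measurable[OF Q]) auto
    thus False using mQ by (simp add: emeasure_eq_measure)
  qed
  ultimately show ?thesis by simp
qed

lemma pw_neg:
  fixes a b w w' \<theta> :: real
  assumes "a \<ge> 0" "b \<ge> 0" "w' \<le> \<theta>" "\<theta> \<le> 1" "(1-w')*b < w'*a"
  shows "(1-\<theta>)*b - \<theta>*a < 0"
proof -
  have "(1-\<theta>)*b \<le> (1-w')*b" using assms by (intro mult_right_mono) auto
  moreover have "w'*a \<le> \<theta>*a" using assms by (intro mult_right_mono) auto
  ultimately show ?thesis using assms by linarith
qed

lemma pw_pos:
  fixes a b w \<theta> :: real
  assumes "a \<ge> 0" "b \<ge> 0" "\<theta> \<le> w" "0 \<le> \<theta>" "w*a \<le> (1-w)*b"
  shows "(1-\<theta>)*b - \<theta>*a \<ge> 0" and "w*a < (1-w)*b \<Longrightarrow> (1-\<theta>)*b - \<theta>*a > 0"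
proof -
  have "(1-w)*b \<le> (1-\<theta>)*b" using assms by (intro mult_right_mono) auto
  moreover have "\<theta>*a \<le> w*a" using assms by (intro mult_right_mono) auto
  ultimately show "(1-\<theta>)*b - \<theta>*a \<ge> 0" "w*a < (1-w)*b \<Longrightarrow> (1-\<theta>)*b - \<theta>*a > 0"
    using assms by linarith+
qed

lemma mono_step:
  fixes M :: "'a measure" and X1 X2 :: "'a \<Rightarrow> real"
    and f1 f2 :: "real \<Rightarrow> ennreal"
  assumes P: "prob_space M"
    and ind: "prob_space.indep_var M borel X1 borel X2"
    and D1: "distributed M lborel X1 f1"
    and D2: "distributed M lborel X2 f2"
    and p1: "\<And>x. f1 x > 0" and p2: "\<And>x. f2 x > 0"
    and i1: "integrable M (\<lambda>\<omega>. (X1 \<omega>)^2)"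
    and i2: "integrable M (\<lambda>\<omega>. (X2 \<omega>)^2)"
    and th: "0 \<le> \<theta>" "\<theta> \<le> 1"
    and w: "0 \<le> w" "w < w'" "w' \<le> 1"
  shows "w' \<le> \<theta> \<Longrightarrow> loss M X1 X2 \<theta> w' < loss M X1 X2 \<theta> w"
    and "\<theta> \<le> w \<Longrightarrow> loss M X1 X2 \<theta> w < loss M X1 X2 \<theta> w'"
proof -
  interpret prob_space M by fact
  have m1[measurable]: "X1 \<in> borel_measurable M" using distributed_measurable[OF D1] by simp
  have m2[measurable]: "X2 \<in> borel_measurable M" using distributed_measurable[OF D2] by simp
  define h where "h = (\<lambda>\<omega>. indicator {\<omega>. w*(X1 \<omega>)^2 \<le> (1-w)*(X2 \<omega>)^2 \<and> (1-w')*(X2 \<omega>)^2 < w'*(X1 \<omega>)^2} \<omega> * ((1-\<theta>)*(X2 \<omega>)^2 - \<theta>*(X1 \<omega>)^2))"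
  have diff: "loss M X1 X2 \<theta> w' - loss M X1 X2 \<theta> w = integral\<^sup>L M h"
    unfolding h_def by (rule loss_diff[OF P m1 m2 i1 i2 w(2)])
  have hi: "integrable M h"
  proof (rule Bochner_Integration.integrable_bound[OF Bochner_Integration.integrable_add[OF i1 i2]])
    show "h \<in> borel_measurable M" unfolding h_def by measurable
    show "AE \<omega> in M. norm (h \<omega>) \<le> norm ((X1 \<omega>)^2 + (X2 \<omega>)^2)"
    proof (rule AE_I2)
      fix \<omega>
      have "\<bar>(1-\<theta>)*(X2 \<omega>)^2 - \<theta>*(X1 \<omega>)^2\<bar> \<le> (1-\<theta>)*(X2 \<omega>)^2 + \<theta>*(X1 \<omega>)^2"
        using th by (simp add: abs_le_iff)
      also have "\<dots> \<le> (X1 \<omega>)^2 + (X2 \<omega>)^2"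
        using th mult_right_mono[of "1-\<theta>" 1 "(X2 \<omega>)^2"] mult_right_mono[of \<theta> 1 "(X1 \<omega>)^2"] by simp
      finally show "norm (h \<omega>) \<le> norm ((X1 \<omega>)^2 + (X2 \<omega>)^2)"
        unfolding h_def by (auto simp: indicator_def)
    qed
  qed
  let ?Q = "\<lambda>\<omega>. w*(X1 \<omega>)^2 < (1-w)*(X2 \<omega>)^2 \<and> (1-w')*(X2 \<omega>)^2 < w'*(X1 \<omega>)^2"
  have Qs: "{\<omega>\<in>space M. ?Q \<omega>} \<in> sets M" by measurable
  have mQ: "measure M {\<omega>\<in>space M. ?Q \<omega>} > 0" by (rule pos_prob[OF P ind D1 D2 p1 p2 w])
  show "loss M X1 X2 \<theta> w' < loss M X1 X2 \<theta> w" if "w' \<le> \<theta>"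
  proof -
    have "integral\<^sup>L M (\<lambda>\<omega>. - h \<omega>) > 0"
    proof (rule integral_pos_aux[OF P _ _ Qs mQ])
      show "integrable M (\<lambda>\<omega>. - h \<omega>)" using hi by simp
      fix \<omega>
      show "- h \<omega> \<ge> 0" unfolding h_def
        using pw_neg[of "(X1 \<omega>)^2" "(X2 \<omega>)^2" w' \<theta>] that th by (auto simp: indicator_def)
      show "- h \<omega> > 0" if "?Q \<omega>" unfolding h_def
        using pw_neg[of "(X1 \<omega>)^2" "(X2 \<omega>)^2" w' \<theta>] \<open>w' \<le> \<theta>\<close> th that by (auto simp: indicator_def)
    qed
    thus ?thesis using diff by simp
  qed
  show "loss M X1 X2 \<theta> w < loss M X1 X2 \<theta> w'" if "\<theta> \<le> w"
  proof -
    have "integral\<^sup>L M h > 0"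
    proof (rule integral_pos_aux[OF P hi _ Qs mQ])
      fix \<omega>
      show "h \<omega> \<ge> 0" unfolding h_def
        using pw_pos[of "(X1 \<omega>)^2" "(X2 \<omega>)^2" \<theta> w] that th by (auto simp: indicator_def)
      show "h \<omega> > 0" if "?Q \<omega>" unfolding h_def
        using pw_pos[of "(X1 \<omega>)^2" "(X2 \<omega>)^2" \<theta> w] \<open>\<theta> \<le> w\<close> th that by (auto simp: indicator_def)
    qed
    thus ?thesis using diff by simp
  qed
qed

theorem lemma2:
  fixes M :: "'a measure" and X1 X2 :: "'a \<Rightarrow> real"
    and f1 f2 :: "real \<Rightarrow> ennreal" and \<theta> :: real
  assumes "prob_space M"
    and "prob_space.indep_var M borel X1 borel X2"
    and "distributed M lborel X1 f1"
    and "distributed M lborel X2 f2"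
    and "\<And>x. f1 x > 0" and "\<And>x. f2 x > 0"
    and "integrable M (\<lambda>\<omega>. (X1 \<omega>)^2)"
    and "integrable M (\<lambda>\<omega>. (X2 \<omega>)^2)"
    and "\<And>x. f1 (integral\<^sup>L M X1 + x) = f1 (integral\<^sup>L M X1 - x)"
    and "\<And>x. f2 (integral\<^sup>L M X2 + x) = f2 (integral\<^sup>L M X2 - x)"
    and "\<theta> \<in> {0..1}"
  shows "strictly_quasiconvex_on {0..1} (loss M X1 X2 \<theta>)
         \<and> (\<forall>w\<in>{0..1}. loss M X1 X2 \<theta> \<theta> \<le> loss M X1 X2 \<theta> w)"
proof -
  note A = assms(1-8)
  have th: "0 \<le> \<theta>" "\<theta> \<le> 1" using assms(11) by auto
  let ?L = "loss M X1 X2 \<theta>"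
  have dec: "?L w' < ?L w" if "0 \<le> w" "w < w'" "w' \<le> \<theta>" for w w'
    using mono_step(1)[OF A th that(1,2) _ that(3)] that th by linarith
  have inc: "?L w < ?L w'" if "\<theta> \<le> w" "w < w'" "w' \<le> 1" for w w'
    using mono_step(2)[OF A th _ that(2,3) that(1)] that th by linarith
  have key: "?L z < max (?L x) (?L y)" if "x \<in> {0..1}" "y \<in> {0..1}" "x < z" "z < y" for x y z
  proof (cases "z \<le> \<theta>")
    case True
    then show ?thesis using dec[of x z] that by auto
  next
    case False
    then show ?thesis using inc[of z y] that by auto
  qed
  have "strictly_quasiconvex_on {0..1} ?L"
    unfolding strictly_quasiconvex_on_def
  proof (intro ballI allI impI)
    fix x y :: real and t :: real assume x: "x \<in> {0..1}" and y: "y \<in> {0..1}" and h: "x \<noteq> y \<and> 0 < t \<and> t < 1"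
    let ?z = "(1 - t) * x + t * y"
    show "?L ?z < max (?L x) (?L y)"
    proof (cases "x < y")
      case True
      have e1: "?z - x = t*(y-x)" "y - ?z = (1-t)*(y-x)" by (simp_all add: algebra_simps)
      have p1: "t*(y-x) > 0" and p2: "(1-t)*(y-x) > 0" using True h by simp_all
      have "x < ?z" using e1(1) p1 by linarith
      moreover have "?z < y" using e1(2) p2 by linarith
      ultimately show ?thesis using key[OF x y] by simp
    next
      case False
      hence yx: "y < x" using h by simp
      have e1: "?z - y = (1-t)*(x-y)" "x - ?z = t*(x-y)" by (simp_all add: algebra_simps)
      have p1: "t*(x-y) > 0" and p2: "(1-t)*(x-y) > 0" using yx h by simp_all
      have "y < ?z" using e1(1) p2 by linarith
      moreover have "?z < x" using e1(2) p1 by linarith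
      ultimately show ?thesis using key[OF y x] by (simp add: max.commute)
    qed
  qed
  moreover have "\<forall>w\<in>{0..1}. ?L \<theta> \<le> ?L w"
  proof
    fix w :: real assume w: "w \<in> {0..1}"
    consider "w < \<theta>" | "w = \<theta>" | "\<theta> < w" by linarith
    thus "?L \<theta> \<le> ?L w"
    proof cases
      case 1 thus ?thesis using dec[of w \<theta>] w by auto
    next
      case 2 thus ?thesis by simp
    next
      case 3 thus ?thesis using inc[of \<theta> w] w th by auto
    qed
  qed
  ultimately show ?thesis by blast
qed

end
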